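(* Let $1<p<\infty$, $s\in(0,1)$ with $sp<N$, let $\Omega\subset\mathbb{R}^N$ be an open bounded connected set, $a\in L^{N/(sp)}(\Omega)$, $\mu\in\mathbb{R}$, $p\le q\le p^*_s$. Let $u\in D^{s,p}_0(\Omega)\setminus\{0\}$ be nonnegative and satisfy, for every nonnegative $\varphi\in D^{s,p}_0(\Omega)$, $$\int_{\mathbb{R}^{2N}}\frac{J_p(u(x)-u(y))(\varphi(x)-\varphi(y))}{|x-y|^{N+sp}}dxdy+\int_\Omega a\,u^{p-1}\varphi\,dx\ge\mu\int_\Omega u^{q-1}\varphi\,dx.$$ Then $u>0$ almost everywhere in $\Omega$.
   Context: $p^*_s=Np/(N-sp)$; $J_p(t)=|t|^{p-2}t$; $[u]_{D^{s,p}(\mathbb{R}^N)}=\big(\int_{\mathbb{R}^{2N}}\frac{|u(x)-u(y)|^p}{|x-y|^{N+sp}}dxdy\big)^{1/p}$; $D^{s,p}_0(\mathbb{R}^N)=\{u\in L^{p^*_s}:[u]<\infty\}$; $D^{s,p}_0(\Omega)=\{u\in D^{s,p}_0(\mathbb{R}^N):u=0\text{ a.e. outside }\Omega\}$. *)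

theory Defs
  imports "HOL-Analysis.Analysis"
begin

definition frac_crit_exp :: "nat \<Rightarrow> real \<Rightarrow> real \<Rightarrow> real" where
  "frac_crit_exp N s p = real N * p / (real N - s * p)"

definition Jp :: "real \<Rightarrow> real \<Rightarrow> real" where
  "Jp p t = \<bar>t\<bar> powr (p - 2) * t"

definition gagliardo_pow :: "real \<Rightarrow> real \<Rightarrow> ('a::euclidean_space \<Rightarrow> real) \<Rightarrow> ennreal" where
  "gagliardo_pow s p u =
     (\<integral>\<^sup>+ z. ennreal (\<bar>u (fst z) - u (snd z)\<bar> powr p /
              norm (fst z - snd z) powr (real DIM('a) + s * p)) \<partial>(lborel \<Otimes>\<^sub>M lborel))"

definition Dsp0_RN :: "real \<Rightarrow> real \<Rightarrow> ('a::euclidean_space \<Rightarrow> real) set" where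
  "Dsp0_RN s p = {u. u \<in> borel_measurable lborel
      \<and> integrable lborel (\<lambda>x. \<bar>u x\<bar> powr (frac_crit_exp DIM('a) s p))
      \<and> gagliardo_pow s p u < \<infinity>}"

definition Dsp0 :: "real \<Rightarrow> real \<Rightarrow> 'a set \<Rightarrow> ('a::euclidean_space \<Rightarrow> real) set" where
  "Dsp0 s p \<Omega> = {u \<in> Dsp0_RN s p. AE x in lborel. x \<notin> \<Omega> \<longrightarrow> u x = 0}"

end

theory Submission
  imports Defs
begin



lemma ennreal_le_suminf: "(f::nat \<Rightarrow> ennreal) k \<le> suminf f"
proof -
  have "f k \<le> (\<Sum>i<Suc k. f i)" by (rule member_le_sum) auto
  also have "\<dots> \<le> suminf f" by (rule sum_le_suminf) auto
  finally show ?thesis .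
qed

lemma shell_index:
  fixes r :: real assumes "0 < r" "r \<le> 1"
  shows "\<exists>k. (1/2)^(Suc k) < r \<and> r \<le> (1/2)^k"
proof -
  obtain n where n: "(1/2::real)^n < r" using real_arch_pow_inv[of r "1/2"] assms by auto
  define m where "m = (LEAST n. (1/2::real)^n < r)"
  have m: "(1/2::real)^m < r" unfolding m_def by (rule LeastI[of _ n]) (rule n)
  have m0: "m \<noteq> 0" using m assms by (intro notI) simp
  then obtain k where k: "m = Suc k" by (cases m) auto
  have "\<not> (1/2::real)^k < r"
  proof
    assume "(1/2::real)^k < r"
    then have "m \<le> k" unfolding m_def by (rule Least_le)
    with k show False by simp
  qed
  with m k show ?thesis by (intro exI[of _ k]) auto
qed

lemma shell_index_big:
  fixes r :: real assumes "1 < r"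
  shows "\<exists>k. 2^k < r \<and> r \<le> 2^(Suc k)"
proof -
  obtain n where n: "r \<le> (2::real)^n" using real_arch_pow[of 2 r] by (auto intro: less_imp_le)
  define m where "m = (LEAST n. r \<le> (2::real)^n)"
  have m: "r \<le> (2::real)^m" unfolding m_def by (rule LeastI[of _ n]) (rule n)
  have m0: "m \<noteq> 0" using m assms by (intro notI) simp
  then obtain k where k: "m = Suc k" by (cases m) auto
  have "\<not> r \<le> (2::real)^k"
  proof
    assume "r \<le> (2::real)^k"
    then have "m \<le> k" unfolding m_def by (rule Least_le)
    with k show False by simp
  qed
  with m k show ?thesis by (intro exI[of _ k]) auto
qed

lemma nn_small:
  fixes \<gamma> :: real
  assumes g: "0 < \<gamma>" "\<gamma> < real DIM('a)"
  shows "(\<integral>\<^sup>+h. indicator (cball (0::'a::euclidean_space) 1) h * ennreal (norm h powr (-\<gamma>)) \<partial>lborel) < \<infinity>"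
proof -
  define N where "N = real DIM('a)"
  define S where "S k = {h::'a. (1/2)^(Suc k) < norm h \<and> norm h \<le> (1/2::real)^k}" for k
  define V where "V = unit_ball_vol N"
  define q where "q = (2::real) powr (\<gamma> - N)"
  have q: "0 < q" "q < 1"
  proof -
    show "0 < q" unfolding q_def by simp
    have "(2::real) powr (\<gamma> - N) < 2 powr 0" using g N_def by (intro powr_less_mono) auto
    then show "q < 1" unfolding q_def by simp
  qed
  have Smeas: "S k \<in> sets lborel" for k unfolding S_def by measurable
  have pt: "indicator (cball (0::'a) 1) h * ennreal (norm h powr (-\<gamma>))
      \<le> (\<Sum>k. indicator (S k) h * ennreal (norm h powr (-\<gamma>)))" for h
  proof (cases "h = 0 \<or> norm h > 1")
    case True then show ?thesis by (auto simp: indicator_def)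
  next
    case False
    then obtain k where k: "(1/2)^(Suc k) < norm h" "norm h \<le> (1/2::real)^k"
      using shell_index[of "norm h"] by auto
    then have "h \<in> S k" unfolding S_def by auto
    then have "indicator (cball (0::'a) 1) h * ennreal (norm h powr (-\<gamma>))
        = indicator (S k) h * ennreal (norm h powr (-\<gamma>))" using False by (auto simp: indicator_def)
    also have "\<dots> \<le> (\<Sum>k. indicator (S k) h * ennreal (norm h powr (-\<gamma>)))"
      by (rule ennreal_le_suminf)
    finally show ?thesis .
  qed
  have trm: "(\<integral>\<^sup>+h. indicator (S k) h * ennreal (norm h powr (-\<gamma>)) \<partial>lborel)
      \<le> ennreal (V * 2 powr \<gamma> * q^k)" for k
  proof -
    have "(\<integral>\<^sup>+h. indicator (S k) h * ennreal (norm h powr (-\<gamma>)) \<partial>lborel)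
        \<le> (\<integral>\<^sup>+h. ennreal (((1/2)^(Suc k)) powr (-\<gamma>)) * indicator (S k) h \<partial>lborel)"
    proof (rule nn_integral_mono)
      fix h show "indicator (S k) h * ennreal (norm h powr (-\<gamma>))
          \<le> ennreal (((1/2)^(Suc k)) powr (-\<gamma>)) * indicator (S k) h"
      proof (cases "h \<in> S k")
        case True
        then have "(1/2)^(Suc k) < norm h" unfolding S_def by auto
        then have "norm h powr (-\<gamma>) \<le> ((1/2)^(Suc k)) powr (-\<gamma>)"
          using g by (intro powr_mono2') auto
        then show ?thesis using True by (auto simp: indicator_def intro: ennreal_leI)
      qed (auto simp: indicator_def)
    qed
    also have "\<dots> = ennreal (((1/2)^(Suc k)) powr (-\<gamma>)) * emeasure lborel (S k)"
      using Smeas by (rule nn_integral_cmult_indicator)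
    also have "\<dots> \<le> ennreal (((1/2)^(Suc k)) powr (-\<gamma>)) * emeasure lborel (cball (0::'a) ((1/2)^k))"
      by (intro mult_left_mono emeasure_mono) (auto simp: S_def)
    also have "\<dots> = ennreal (((1/2)^(Suc k)) powr (-\<gamma>) * (V * ((1/2)^k)^DIM('a)))"
      by (subst emeasure_cball) (auto simp: V_def N_def ennreal_mult)
    also have "((1/2::real)^(Suc k)) powr (-\<gamma>) * (V * ((1/2)^k)^DIM('a)) = V * 2 powr \<gamma> * q^k"
    proof -
      have a0: "(1/2::real)^(Suc k) = 2 powr (- real (Suc k))"
      proof -
        have "(2::real) powr (- real (Suc k)) = inverse (2 powr real (Suc k))" by (rule powr_minus)
        also have "\<dots> = inverse (2 ^ Suc k)" by (subst powr_realpow) auto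
        finally show ?thesis by (simp only: power_one_over inverse_eq_divide)
      qed
      have a1: "(2 powr \<gamma>) ^ k = (2::real) powr (real k * \<gamma>)"
        by (simp add: powr_realpow[symmetric] powr_powr mult.commute)
      have a: "((1/2::real)^(Suc k)) powr (-\<gamma>) = 2 powr \<gamma> * (2 powr \<gamma>)^k"
        unfolding a0 a1 by (simp add: powr_powr powr_add[symmetric] algebra_simps)
      have b: "((1/2::real)^k)^DIM('a) = (2 powr (-N))^k"
        by (simp add: N_def powr_minus_divide power_divide powr_realpow flip: power_mult)
      have c: "q^k = (2 powr \<gamma>)^k * (2 powr (-N))^k"
        unfolding q_def by (simp add: power_mult_distrib[symmetric] powr_add[symmetric])
      show ?thesis unfolding a b c by simp
    qed
    finally show ?thesis .
  qed
  have "(\<integral>\<^sup>+h. indicator (cball (0::'a) 1) h * ennreal (norm h powr (-\<gamma>)) \<partial>lborel)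
      \<le> (\<integral>\<^sup>+h. (\<Sum>k. indicator (S k) h * ennreal (norm h powr (-\<gamma>))) \<partial>lborel)"
    by (rule nn_integral_mono) (rule pt)
  also have "\<dots> = (\<Sum>k. \<integral>\<^sup>+h. indicator (S k) h * ennreal (norm h powr (-\<gamma>)) \<partial>lborel)"
    by (rule nn_integral_suminf) (use Smeas in measurable)
  also have "\<dots> \<le> (\<Sum>k. ennreal (V * 2 powr \<gamma> * q^k))"
    by (intro suminf_le trm) auto
  also have "\<dots> = ennreal (\<Sum>k. V * 2 powr \<gamma> * q^k)"
    using q by (intro suminf_ennreal2) (auto simp: V_def N_def intro!: summable_mult summable_geometric)
  also have "\<dots> < \<infinity>" by simp
  finally show ?thesis .
qed


lemma nn_big:
  fixes \<gamma> :: real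
  assumes g: "real DIM('a) < \<gamma>"
  shows "(\<integral>\<^sup>+h. indicator {h::'a::euclidean_space. 1 < norm h} h * ennreal (norm h powr (-\<gamma>)) \<partial>lborel) < \<infinity>"
proof -
  define N where "N = real DIM('a)"
  define S where "S k = {h::'a. 2^k < norm h \<and> norm h \<le> (2::real)^(Suc k)}" for k
  define V where "V = unit_ball_vol N"
  define q where "q = (2::real) powr (N - \<gamma>)"
  have q: "0 < q" "q < 1"
  proof -
    show "0 < q" unfolding q_def by simp
    have "(2::real) powr (N - \<gamma>) < 2 powr 0" using g N_def by (intro powr_less_mono) auto
    then show "q < 1" unfolding q_def by simp
  qed
  have Smeas: "S k \<in> sets lborel" for k unfolding S_def by measurable
  have pt: "indicator {h::'a. 1 < norm h} h * ennreal (norm h powr (-\<gamma>))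
      \<le> (\<Sum>k. indicator (S k) h * ennreal (norm h powr (-\<gamma>)))" for h
  proof (cases "norm h \<le> 1")
    case True then show ?thesis by (auto simp: indicator_def)
  next
    case False
    then obtain k where k: "2^k < norm h" "norm h \<le> (2::real)^(Suc k)"
      using shell_index_big[of "norm h"] by auto
    then have "h \<in> S k" unfolding S_def by auto
    then have "indicator {h::'a. 1 < norm h} h * ennreal (norm h powr (-\<gamma>))
        = indicator (S k) h * ennreal (norm h powr (-\<gamma>))" using False by (auto simp: indicator_def)
    also have "\<dots> \<le> (\<Sum>k. indicator (S k) h * ennreal (norm h powr (-\<gamma>)))"
      by (rule ennreal_le_suminf)
    finally show ?thesis .
  qed
  have trm: "(\<integral>\<^sup>+h. indicator (S k) h * ennreal (norm h powr (-\<gamma>)) \<partial>lborel)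
      \<le> ennreal (V * 2 powr N * q^k)" for k
  proof -
    have "(\<integral>\<^sup>+h. indicator (S k) h * ennreal (norm h powr (-\<gamma>)) \<partial>lborel)
        \<le> (\<integral>\<^sup>+h. ennreal ((2^k) powr (-\<gamma>)) * indicator (S k) h \<partial>lborel)"
    proof (rule nn_integral_mono)
      fix h show "indicator (S k) h * ennreal (norm h powr (-\<gamma>))
          \<le> ennreal ((2^k) powr (-\<gamma>)) * indicator (S k) h"
      proof (cases "h \<in> S k")
        case True
        then have "2^k < norm h" unfolding S_def by auto
        then have "norm h powr (-\<gamma>) \<le> (2^k) powr (-\<gamma>)"
          using g by (intro powr_mono2') (auto intro: order_trans[OF _ of_nat_0_le_iff])
        then show ?thesis using True by (auto simp: indicator_def intro: ennreal_leI)
      qed (auto simp: indicator_def)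
    qed
    also have "\<dots> = ennreal ((2^k) powr (-\<gamma>)) * emeasure lborel (S k)"
      using Smeas by (rule nn_integral_cmult_indicator)
    also have "\<dots> \<le> ennreal ((2^k) powr (-\<gamma>)) * emeasure lborel (cball (0::'a) (2^(Suc k)))"
      by (intro mult_left_mono emeasure_mono) (auto simp: S_def)
    also have "\<dots> = ennreal ((2^k) powr (-\<gamma>) * (V * (2^(Suc k))^DIM('a)))"
      by (subst emeasure_cball) (auto simp: V_def N_def ennreal_mult)
    also have "(2^k) powr (-\<gamma>) * (V * (2^(Suc k))^DIM('a)) = V * 2 powr N * q^k"
    proof -
      have a: "((2::real)^k) powr (-\<gamma>) = (2 powr (-\<gamma>))^k"
        by (simp add: powr_realpow[symmetric] powr_powr mult.commute)
      have b: "((2::real)^(Suc k))^DIM('a) = 2 powr N * (2 powr N)^k"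
        by (simp add: N_def powr_realpow power_mult_distrib flip: power_mult)
      have c: "q^k = (2 powr (-\<gamma>))^k * (2 powr N)^k"
        unfolding q_def by (simp add: power_mult_distrib[symmetric] powr_add[symmetric])
      show ?thesis unfolding a b c by simp
    qed
    finally show ?thesis .
  qed
  have "(\<integral>\<^sup>+h. indicator {h::'a. 1 < norm h} h * ennreal (norm h powr (-\<gamma>)) \<partial>lborel)
      \<le> (\<integral>\<^sup>+h. (\<Sum>k. indicator (S k) h * ennreal (norm h powr (-\<gamma>))) \<partial>lborel)"
    by (rule nn_integral_mono) (rule pt)
  also have "\<dots> = (\<Sum>k. \<integral>\<^sup>+h. indicator (S k) h * ennreal (norm h powr (-\<gamma>)) \<partial>lborel)"
    by (rule nn_integral_suminf) (use Smeas in measurable)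
  also have "\<dots> \<le> (\<Sum>k. ennreal (V * 2 powr N * q^k))"
    by (intro suminf_le trm) auto
  also have "\<dots> = ennreal (\<Sum>k. V * 2 powr N * q^k)"
    using q by (intro suminf_ennreal2) (auto simp: V_def N_def intro!: summable_mult summable_geometric)
  also have "\<dots> < \<infinity>" by simp
  finally show ?thesis .
qed




lemma nn_translate:
  fixes c :: "'a::euclidean_space"
  assumes f: "f \<in> borel_measurable borel"
  shows "(\<integral>\<^sup>+y. f (c + y) \<partial>lborel) = (\<integral>\<^sup>+y. f y \<partial>lborel)"
proof -
  have "(\<integral>\<^sup>+y. f y \<partial>lborel) = (\<integral>\<^sup>+y. f y \<partial>distr lborel borel ((+) c))"
    by (simp add: lborel_distr_plus)
  also have "\<dots> = (\<integral>\<^sup>+y. f (c + y) \<partial>lborel)"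
    using f by (intro nn_integral_distr) auto
  finally show ?thesis ..
qed

lemma kernel_fin:
  fixes s p L :: real
  assumes s: "0 < s" "s < 1" and p: "0 < p" and L: "0 < L"
  shows "(\<integral>\<^sup>+h. ennreal (min (norm h) L powr p / norm (h::'a::euclidean_space) powr (real DIM('a) + s * p)) \<partial>lborel) < \<infinity>"
proof -
  define N where "N = real DIM('a)"
  define \<gamma> where "\<gamma> = max (N + s * p - p) (N / 2)"
  have N: "0 < N" unfolding N_def by simp
  have sp: "s * p < p" using s p by simp
  have g: "0 < \<gamma>" "\<gamma> < real DIM('a)"
  proof -
    have "N/2 \<le> \<gamma>" unfolding \<gamma>_def by simp
    then show "0 < \<gamma>" using N by linarith
    show "\<gamma> < real DIM('a)" using N sp unfolding \<gamma>_def N_def by auto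
  qed
  have g2: "real DIM('a) < N + s * p" using s p unfolding N_def by simp
  have pt: "ennreal (min (norm h) L powr p / norm h powr (N + s * p))
      \<le> indicator (cball 0 1) h * ennreal (norm h powr (-\<gamma>))
       + ennreal (L powr p) * (indicator {h. 1 < norm h} h * ennreal (norm h powr (-(N + s*p))))"
    for h :: 'a
  proof (cases "h = 0")
    case True then show ?thesis by simp
  next
    case h0: False
    then have nh: "0 < norm h" by simp
    have base: "min (norm h) L powr p / norm h powr (N + s * p)
        = min (norm h) L powr p * norm h powr (-(N + s*p))"
      by (simp add: powr_minus[of _ "N + s*p"] divide_inverse del: minus_add_distrib)
    show ?thesis
    proof (cases "norm h \<le> 1")
      case True
      have "min (norm h) L powr p * norm h powr (-(N + s*p)) \<le> norm h powr p * norm h powr (-(N + s*p))"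
        using nh p L by (intro mult_right_mono powr_mono2) auto
      also have "\<dots> = norm h powr (p - N - s*p)" by (simp add: powr_add[symmetric] algebra_simps)
      also have "\<dots> \<le> norm h powr (-\<gamma>)"
        using True nh by (intro powr_mono') (auto simp: \<gamma>_def)
      finally have "ennreal (min (norm h) L powr p / norm h powr (N + s * p)) \<le> ennreal (norm h powr (-\<gamma>))"
        unfolding base by (rule ennreal_leI)
      then show ?thesis using True by (auto simp: indicator_def intro: add_increasing2)
    next
      case False
      have "min (norm h) L powr p * norm h powr (-(N + s*p)) \<le> L powr p * norm h powr (-(N + s*p))"
        using nh p L by (intro mult_right_mono powr_mono2) auto
      then have "ennreal (min (norm h) L powr p / norm h powr (N + s * p)) \<le> ennreal (L powr p) * ennreal (norm h powr (-(N + s*p)))"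
        unfolding base by (simp add: ennreal_mult[symmetric] ennreal_leI)
      then show ?thesis using False by (auto simp: indicator_def intro: add_increasing)
    qed
  qed
  have "(\<integral>\<^sup>+h. ennreal (min (norm h) L powr p / norm (h::'a) powr (N + s * p)) \<partial>lborel)
     \<le> (\<integral>\<^sup>+h. indicator (cball 0 1) h * ennreal (norm (h::'a) powr (-\<gamma>))
       + ennreal (L powr p) * (indicator {h. 1 < norm h} h * ennreal (norm h powr (-(N + s*p)))) \<partial>lborel)"
    by (rule nn_integral_mono) (rule pt)
  also have "\<dots> = (\<integral>\<^sup>+h. indicator (cball 0 1) h * ennreal (norm (h::'a) powr (-\<gamma>)) \<partial>lborel)
      + ennreal (L powr p) * (\<integral>\<^sup>+h. indicator {h::'a. 1 < norm h} h * ennreal (norm h powr (-(N + s*p))) \<partial>lborel)"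
    by (subst nn_integral_add; (measurable)?; simp add: nn_integral_cmult)
  also have "\<dots> < \<infinity>"
    using nn_small[OF g] nn_big[OF g2] by (auto simp: ennreal_mult_less_top)
  finally show ?thesis unfolding N_def .
qed


lemma translate_G:
  fixes c :: "'a::euclidean_space" and s p L :: real
  shows "(\<integral>\<^sup>+y. ennreal (min (norm (c - y)) L powr p / norm (c - y) powr (real DIM('a) + s * p)) \<partial>lborel)
       = (\<integral>\<^sup>+h. ennreal (min (norm h) L powr p / norm (h::'a) powr (real DIM('a) + s * p)) \<partial>lborel)"
proof -
  have "(\<integral>\<^sup>+y. ennreal (min (norm (c - y)) L powr p / norm (c - y) powr (real DIM('a) + s * p)) \<partial>lborel)
     = (\<integral>\<^sup>+y. ennreal (min (norm (-c + y)) L powr p / norm (-c + y) powr (real DIM('a) + s * p)) \<partial>lborel)"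
    by (rule nn_integral_cong) (simp add: norm_minus_commute)
  also have "\<dots> = (\<integral>\<^sup>+h. ennreal (min (norm h) L powr p / norm (h::'a) powr (real DIM('a) + s * p)) \<partial>lborel)"
    by (rule nn_translate[of "\<lambda>h. ennreal (min (norm h) L powr p / norm (h::'a) powr (real DIM('a) + s * p))"]) measurable
  finally show ?thesis .
qed

lemma gag_lip:
  fixes \<eta> :: "'a::euclidean_space \<Rightarrow> real" and \<Omega> :: "'a set" and s p C :: real
  assumes s: "0 < s" "s < 1" and p: "0 < p" and \<Omega>: "\<Omega> \<in> sets lborel" "bounded \<Omega>" and C: "0 < C"
    and lip: "\<And>x y. \<bar>\<eta> x - \<eta> y\<bar> \<le> dist x y" and bnd: "\<And>x. \<bar>\<eta> x\<bar> \<le> C"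
    and zero: "\<And>x. x \<notin> \<Omega> \<Longrightarrow> \<eta> x = 0"
  shows "gagliardo_pow s p \<eta> < \<infinity>"
proof -
  define N where "N = real DIM('a)"
  define L where "L = 2 * C"
  define g where "g h = ennreal (min (norm h) L powr p / norm (h::'a) powr (N + s * p))" for h
  have gm[measurable]: "g \<in> borel_measurable borel" unfolding g_def by measurable
  define G where "G = (\<integral>\<^sup>+h. g h \<partial>lborel)"
  have G: "G < \<infinity>" unfolding G_def g_def N_def using kernel_fin[OF s p, of L] C L_def by simp
  have tr: "(\<integral>\<^sup>+y. g (c - y) \<partial>lborel) = G" for c
    unfolding G_def g_def N_def by (rule translate_G)
  have pt: "ennreal (\<bar>\<eta> (fst z) - \<eta> (snd z)\<bar> powr p / norm (fst z - snd z) powr (N + s * p))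
      \<le> indicator \<Omega> (fst z) * g (fst z - snd z) + indicator \<Omega> (snd z) * g (fst z - snd z)" for z
  proof (cases "fst z \<in> \<Omega> \<or> snd z \<in> \<Omega>")
    case False then show ?thesis using zero by simp
  next
    case True
    have "\<bar>\<eta> (fst z) - \<eta> (snd z)\<bar> \<le> min (norm (fst z - snd z)) L"
      using lip[of "fst z" "snd z"] bnd[of "fst z"] bnd[of "snd z"] unfolding L_def dist_norm by auto
    then have "\<bar>\<eta> (fst z) - \<eta> (snd z)\<bar> powr p / norm (fst z - snd z) powr (N + s * p)
        \<le> min (norm (fst z - snd z)) L powr p / norm (fst z - snd z) powr (N + s * p)"
      using p by (intro divide_right_mono powr_mono2) auto
    then have "ennreal (\<bar>\<eta> (fst z) - \<eta> (snd z)\<bar> powr p / norm (fst z - snd z) powr (N + s * p))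
        \<le> g (fst z - snd z)" unfolding g_def by (rule ennreal_leI)
    also have "\<dots> \<le> indicator \<Omega> (fst z) * g (fst z - snd z) + indicator \<Omega> (snd z) * g (fst z - snd z)"
      using True by (auto simp: indicator_def)
    finally show ?thesis .
  qed
  have "gagliardo_pow s p \<eta> \<le> (\<integral>\<^sup>+z. indicator \<Omega> (fst z) * g (fst z - snd z) + indicator \<Omega> (snd z) * g (fst z - snd z) \<partial>(lborel \<Otimes>\<^sub>M lborel))"
    unfolding gagliardo_pow_def N_def[symmetric] by (rule nn_integral_mono) (rule pt)
  also have "\<dots> = (\<integral>\<^sup>+z. indicator \<Omega> (fst z) * g (fst z - snd z) \<partial>(lborel \<Otimes>\<^sub>M lborel))
      + (\<integral>\<^sup>+z. indicator \<Omega> (snd z) * g (fst z - snd z) \<partial>(lborel \<Otimes>\<^sub>M lborel))"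
    using \<Omega> by (subst nn_integral_add) auto
  also have "(\<integral>\<^sup>+z. indicator \<Omega> (fst z) * g (fst z - snd z) \<partial>(lborel \<Otimes>\<^sub>M lborel))
      = (\<integral>\<^sup>+x. \<integral>\<^sup>+y. indicator \<Omega> x * g (x - y) \<partial>lborel \<partial>lborel)"
    using \<Omega> by (subst lborel.nn_integral_fst[symmetric]) auto
  also have "\<dots> = (\<integral>\<^sup>+x. indicator \<Omega> x * G \<partial>lborel)"
    by (rule nn_integral_cong) (simp add: nn_integral_cmult tr)
  also have "(\<integral>\<^sup>+z. indicator \<Omega> (snd z) * g (fst z - snd z) \<partial>(lborel \<Otimes>\<^sub>M lborel))
      = (\<integral>\<^sup>+y. \<integral>\<^sup>+x. indicator \<Omega> y * g (x - y) \<partial>lborel \<partial>lborel)"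
    using \<Omega> by (subst lborel_pair.nn_integral_snd[symmetric]) auto
  also have "\<dots> = (\<integral>\<^sup>+y. indicator \<Omega> y * G \<partial>lborel)"
  proof (rule nn_integral_cong)
    fix y :: 'a
    have "(\<integral>\<^sup>+x. g (x - y) \<partial>lborel) = (\<integral>\<^sup>+x. g (y - x) \<partial>lborel)"
      unfolding g_def by (rule nn_integral_cong) (simp add: norm_minus_commute)
    then show "(\<integral>\<^sup>+x. indicator \<Omega> y * g (x - y) \<partial>lborel) = indicator \<Omega> y * G"
      by (simp add: nn_integral_cmult tr)
  qed
  also have "(\<integral>\<^sup>+x. indicator \<Omega> x * G \<partial>lborel) = G * emeasure lborel \<Omega>"
    using \<Omega> by (simp add: nn_integral_cmult_indicator mult.commute)
  finally have "gagliardo_pow s p \<eta> \<le> G * emeasure lborel \<Omega> + G * emeasure lborel \<Omega>" .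
  also have "\<dots> < \<infinity>" using G emeasure_bounded_finite[OF \<Omega>(2)] by (simp add: ennreal_mult_less_top)
  finally show ?thesis .
qed




lemma powr_mul_self: "0 < (x::real) \<Longrightarrow> x powr c * x = x powr (c + 1)"
  by (simp add: powr_add)

lemma young_max:
  fixes a b \<alpha> \<beta> :: real
  assumes "0 \<le> a" "0 \<le> b" "1 < \<alpha>" "1 < \<beta>" "(\<alpha> - 1) * (\<beta> - 1) = 1"
  shows "a * b \<le> a powr \<alpha> + b powr \<beta>"
proof (cases "b \<le> a powr (\<alpha> - 1)")
  case True
  have "a * b \<le> a * a powr (\<alpha> - 1)" using True assms by (intro mult_left_mono) auto
  also have "\<dots> = a powr \<alpha>"
  proof (cases "a = 0")
    case False then show ?thesis using assms powr_mul_self[of a "\<alpha> - 1"] by (simp add: mult.commute)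
  qed (use assms in simp)
  finally show ?thesis using assms by (simp add: add_increasing2)
next
  case False
  then have b0: "0 < b" using assms by (smt (verit) powr_ge_zero)
  have "a = (a powr (\<alpha> - 1)) powr (\<beta> - 1)" using assms by (simp add: powr_powr)
  also have "\<dots> \<le> b powr (\<beta> - 1)" using False assms by (intro powr_mono2) auto
  finally have "a * b \<le> b powr (\<beta> - 1) * b" using b0 by (intro mult_right_mono) auto
  also have "\<dots> = b powr \<beta>" using b0 powr_mul_self[of b "\<beta> - 1"] by simp
  finally show ?thesis using assms by (simp add: add_increasing)
qed

lemma powr_le_1_plus:
  fixes t e E :: real
  assumes "0 \<le> t" "0 < e" "e \<le> E"
  shows "t powr e \<le> 1 + t powr E"
proof (cases "t \<le> 1")
  case True
  have "t powr e \<le> 1 powr e" using True assms by (intro powr_mono2) auto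
  then show ?thesis by (simp add: add_increasing2)
next
  case False
  then have "t powr e \<le> t powr E" using assms by (intro powr_mono) auto
  then show ?thesis by simp
qed

lemma powr_sum_le:
  fixes a b p :: real
  assumes "0 \<le> a" "0 \<le> b" "0 < p"
  shows "(a + b) powr p \<le> 2 powr p * (a powr p + b powr p)"
proof -
  have "(a + b) powr p \<le> (2 * max a b) powr p" using assms by (intro powr_mono2) auto
  also have "\<dots> = 2 powr p * max a b powr p" using assms by (simp add: powr_mult)
  also have "max a b powr p \<le> a powr p + b powr p" by (auto simp: max_def)
  then have "2 powr p * max a b powr p \<le> 2 powr p * (a powr p + b powr p)" by simp
  finally show ?thesis .
qed

lemma abs_Jp: "1 < p \<Longrightarrow> \<bar>Jp p t\<bar> = \<bar>t\<bar> powr (p - 1)"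
proof (cases "t = 0")
  case False
  assume p: "1 < p"
  have "\<bar>Jp p t\<bar> = \<bar>t\<bar> powr (p - 2) * \<bar>t\<bar>" by (simp add: Jp_def abs_mult)
  also have "\<dots> = \<bar>t\<bar> powr (p - 1)" using False powr_mul_self[of "\<bar>t\<bar>" "p - 2"] by simp
  finally show ?thesis .
qed (simp add: Jp_def)

lemma Jp_sign: "0 \<le> t \<Longrightarrow> 0 \<le> Jp p t" "t \<le> 0 \<Longrightarrow> Jp p t \<le> 0"
  by (auto simp: Jp_def mult_nonneg_nonpos)

lemma Jp_neg: "0 < t \<Longrightarrow> 1 < p \<Longrightarrow> Jp p (- t) = - (t powr (p - 1))"
proof -
  assume "0 < t" "1 < p"
  then have "Jp p (-t) = - (t powr (p-2) * t)" by (simp add: Jp_def)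
  also have "\<dots> = - (t powr (p - 1))" using powr_mul_self[of t "p - 2"] \<open>0 < t\<close> by simp
  finally show ?thesis .
qed

lemma Jp_pos: "0 < t \<Longrightarrow> 1 < p \<Longrightarrow> Jp p t = t powr (p - 1)"
proof -
  assume "0 < t" "1 < p"
  then have "Jp p t = t powr (p-2) * t" by (simp add: Jp_def)
  also have "\<dots> = t powr (p - 1)" using powr_mul_self[of t "p - 2"] \<open>0 < t\<close> by simp
  finally show ?thesis .
qed

lemma Jp_measurable[measurable]: "f \<in> borel_measurable M \<Longrightarrow> (\<lambda>x. Jp p (f x)) \<in> borel_measurable M"
  unfolding Jp_def by measurable




lemma gag_integrable:
  fixes f :: "'a::euclidean_space \<Rightarrow> real"
  assumes [measurable]: "f \<in> borel_measurable borel" and gf: "gagliardo_pow s p f < \<infinity>"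
  shows "integrable (lborel \<Otimes>\<^sub>M lborel) (\<lambda>z. \<bar>f (fst z) - f (snd z)\<bar> powr p / norm (fst z - snd z) powr (real DIM('a) + s * p))"
  by (rule integrableI_nonneg) (use gf in \<open>auto simp: gagliardo_pow_def\<close>)

lemma integrable_cross:
  fixes f g :: "'a::euclidean_space \<Rightarrow> real" and w :: "'a \<times> 'a \<Rightarrow> real"
  assumes p: "1 < p" and [measurable]: "f \<in> borel_measurable borel" "g \<in> borel_measurable borel"
    and wm[measurable]: "w \<in> borel_measurable (lborel \<Otimes>\<^sub>M lborel)"
    and gf: "gagliardo_pow s p f < \<infinity>" and gg: "gagliardo_pow s p g < \<infinity>"
    and wb: "\<And>z. \<bar>w z\<bar> \<le> \<bar>g (fst z) - g (snd z)\<bar>"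
  shows "integrable (lborel \<Otimes>\<^sub>M lborel) (\<lambda>z. Jp p (f (fst z) - f (snd z)) * w z / norm (fst z - snd z) powr (real DIM('a) + s * p))"
proof (rule Bochner_Integration.integrable_bound)
  define K where "K z = norm (fst z - snd z) powr (real DIM('a) + s * p)" for z :: "'a \<times> 'a"
  show "integrable (lborel \<Otimes>\<^sub>M lborel) (\<lambda>z. \<bar>f (fst z) - f (snd z)\<bar> powr p / K z + \<bar>g (fst z) - g (snd z)\<bar> powr p / K z)"
    unfolding K_def by (intro Bochner_Integration.integrable_add gag_integrable gf gg) measurable
  show "(\<lambda>z. Jp p (f (fst z) - f (snd z)) * w z / norm (fst z - snd z) powr (real DIM('a) + s * p)) \<in> borel_measurable (lborel \<Otimes>\<^sub>M lborel)"
    by measurable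
  show "AE z in lborel \<Otimes>\<^sub>M lborel. norm (Jp p (f (fst z) - f (snd z)) * w z / norm (fst z - snd z) powr (real DIM('a) + s * p))
     \<le> norm (\<bar>f (fst z) - f (snd z)\<bar> powr p / K z + \<bar>g (fst z) - g (snd z)\<bar> powr p / K z)"
  proof (intro AE_I2)
    fix z :: "'a \<times> 'a"
    define d where "d = \<bar>f (fst z) - f (snd z)\<bar>"
    define e where "e = \<bar>g (fst z) - g (snd z)\<bar>"
    have K0: "0 \<le> K z" unfolding K_def by simp
    have "\<bar>Jp p (f (fst z) - f (snd z)) * w z\<bar> = d powr (p - 1) * \<bar>w z\<bar>"
      using p by (simp add: abs_mult abs_Jp d_def)
    also have "\<dots> \<le> d powr (p - 1) * e" using wb[of z] by (intro mult_left_mono) (auto simp: e_def)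
    also have "\<dots> \<le> (d powr (p - 1)) powr (p / (p - 1)) + e powr p"
      using p by (intro young_max) (auto simp: e_def field_simps)
    also have "(d powr (p - 1)) powr (p / (p - 1)) = d powr p" using p by (simp add: powr_powr)
    finally have "\<bar>Jp p (f (fst z) - f (snd z)) * w z\<bar> / K z \<le> (d powr p + e powr p) / K z"
      using K0 by (intro divide_right_mono) auto
    then show "norm (Jp p (f (fst z) - f (snd z)) * w z / norm (fst z - snd z) powr (real DIM('a) + s * p))
     \<le> norm (\<bar>f (fst z) - f (snd z)\<bar> powr p / K z + \<bar>g (fst z) - g (snd z)\<bar> powr p / K z)"
      using K0 unfolding K_def[symmetric] d_def e_def by (simp add: add_divide_distrib)
  qed
qed

lemma gag_comb:
  fixes f g h :: "'a::euclidean_space \<Rightarrow> real"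
  assumes p: "0 < p" and [measurable]: "g \<in> borel_measurable borel" "h \<in> borel_measurable borel"
    and gg: "gagliardo_pow s p g < \<infinity>" and gh: "gagliardo_pow s p h < \<infinity>" and c: "0 \<le> c"
    and b: "\<And>x y. \<bar>f x - f y\<bar> \<le> \<bar>g x - g y\<bar> + c * \<bar>h x - h y\<bar>"
  shows "gagliardo_pow s p f < \<infinity>"
proof -
  define K where "K z = norm (fst z - snd z) powr (real DIM('a) + s * p)" for z :: "'a \<times> 'a"
  have pt: "ennreal (\<bar>f (fst z) - f (snd z)\<bar> powr p / K z)
      \<le> ennreal (2 powr p) * ennreal (\<bar>g (fst z) - g (snd z)\<bar> powr p / K z)
        + ennreal (2 powr p * c powr p) * ennreal (\<bar>h (fst z) - h (snd z)\<bar> powr p / K z)" for z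
  proof -
    have K0: "0 \<le> K z" unfolding K_def by simp
    have "\<bar>f (fst z) - f (snd z)\<bar> powr p \<le> (\<bar>g (fst z) - g (snd z)\<bar> + c * \<bar>h (fst z) - h (snd z)\<bar>) powr p"
      using b p by (intro powr_mono2) auto
    also have "\<dots> \<le> 2 powr p * (\<bar>g (fst z) - g (snd z)\<bar> powr p + (c * \<bar>h (fst z) - h (snd z)\<bar>) powr p)"
      using p c by (intro powr_sum_le) auto
    also have "\<dots> = 2 powr p * \<bar>g (fst z) - g (snd z)\<bar> powr p + 2 powr p * c powr p * \<bar>h (fst z) - h (snd z)\<bar> powr p"
      using c by (simp add: powr_mult algebra_simps)
    finally have "\<bar>f (fst z) - f (snd z)\<bar> powr p / K z \<le> 2 powr p * (\<bar>g (fst z) - g (snd z)\<bar> powr p / K z)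
        + 2 powr p * c powr p * (\<bar>h (fst z) - h (snd z)\<bar> powr p / K z)"
      using K0 by (metis (no_types, lifting) add_divide_distrib divide_right_mono times_divide_eq_right)
    then show ?thesis
      using K0 c by (simp add: ennreal_mult[symmetric] ennreal_plus[symmetric] ennreal_leI del: ennreal_plus)
  qed
  have "gagliardo_pow s p f \<le> (\<integral>\<^sup>+z. ennreal (2 powr p) * ennreal (\<bar>g (fst z) - g (snd z)\<bar> powr p / K z)
        + ennreal (2 powr p * c powr p) * ennreal (\<bar>h (fst z) - h (snd z)\<bar> powr p / K z) \<partial>(lborel \<Otimes>\<^sub>M lborel))"
    unfolding gagliardo_pow_def K_def[symmetric] by (rule nn_integral_mono) (rule pt)
  also have "\<dots> = ennreal (2 powr p) * gagliardo_pow s p g + ennreal (2 powr p * c powr p) * gagliardo_pow s p h"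
    unfolding gagliardo_pow_def K_def by (subst nn_integral_add) (auto simp: nn_integral_cmult)
  also have "\<dots> < \<infinity>" using gg gh by (simp add: ennreal_mult_less_top)
  finally show ?thesis .
qed




lemma integrable_bounded_support:
  fixes f :: "'a::euclidean_space \<Rightarrow> real"
  assumes [measurable]: "f \<in> borel_measurable borel" and \<Omega>: "\<Omega> \<in> sets lborel" "bounded \<Omega>"
    and C: "AE x in lborel. \<bar>f x\<bar> \<le> C" and z: "AE x in lborel. x \<notin> \<Omega> \<longrightarrow> f x = 0" and e: "0 < e"
  shows "integrable lborel (\<lambda>x. \<bar>f x\<bar> powr e)"
proof (rule Bochner_Integration.integrable_bound)
  show "integrable lborel (\<lambda>x. C powr e * indicator \<Omega> x :: real)"
    using emeasure_bounded_finite[OF \<Omega>(2)] \<Omega> by (intro integrable_mult_right integrable_real_indicator) auto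
  show "(\<lambda>x. \<bar>f x\<bar> powr e) \<in> borel_measurable lborel" by measurable
  show "AE x in lborel. norm (\<bar>f x\<bar> powr e) \<le> norm (C powr e * indicator \<Omega> x :: real)"
    using C z
  proof eventually_elim
    case (elim x)
    show ?case
    proof (cases "x \<in> \<Omega>")
      case True
      have "\<bar>f x\<bar> powr e \<le> C powr e" using elim e by (intro powr_mono2) auto
      then show ?thesis using True by auto
    next
      case False then show ?thesis using elim by simp
    qed
  qed
qed

lemma eta_props:
  fixes \<Omega> :: "'a::euclidean_space set" and s p :: real
  assumes s: "0 < s" "s < 1" and p: "1 < p" and sp: "s * p < real DIM('a)"
    and \<Omega>: "open \<Omega>" "bounded \<Omega>"
  defines "\<eta> \<equiv> \<lambda>x. infdist x (- \<Omega>)"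
  shows "\<eta> \<in> Dsp0 s p \<Omega>" "\<And>x. 0 \<le> \<eta> x" "\<And>x. x \<in> \<Omega> \<Longrightarrow> 0 < \<eta> x"
    "\<And>x. x \<notin> \<Omega> \<Longrightarrow> \<eta> x = 0" "\<eta> \<in> borel_measurable borel" "\<exists>C>0. \<forall>x. \<eta> x \<le> C"
    "\<And>x y. \<bar>\<eta> x - \<eta> y\<bar> \<le> dist x y"
proof -
  obtain R where R: "0 < R" "\<Omega> \<subseteq> cball 0 R" using \<Omega>(2)
    by (metis bounded_pos mem_cball_0 subsetI)
  obtain b :: 'a where b: "b \<in> Basis" using nonempty_Basis by blast
  define w where "w = (R + 1) *\<^sub>R b"
  have nw: "norm w = R + 1" using R b by (simp add: w_def)
  have wO: "w \<in> - \<Omega>" using R nw by auto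
  show lip: "\<And>x y. \<bar>\<eta> x - \<eta> y\<bar> \<le> dist x y"
    unfolding \<eta>_def using infdist_triangle by (smt (verit) dist_commute)
  show nn: "\<And>x. 0 \<le> \<eta> x" unfolding \<eta>_def by (rule infdist_nonneg)
  show zero: "\<And>x. x \<notin> \<Omega> \<Longrightarrow> \<eta> x = 0" unfolding \<eta>_def by (rule infdist_zero) auto
  show "\<And>x. x \<in> \<Omega> \<Longrightarrow> 0 < \<eta> x"
    unfolding \<eta>_def using \<Omega>(1) wO by (intro infdist_pos_not_in_closed) (auto simp: closed_Compl)
  have bnd: "\<eta> x \<le> 2 * R + 1" for x
  proof (cases "x \<in> \<Omega>")
    case True
    have "\<eta> x \<le> dist x w" unfolding \<eta>_def using wO by (rule infdist_le)
    also have "\<dots> \<le> norm x + norm w" by (simp add: dist_norm norm_triangle_ineq4)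
    also have "\<dots> \<le> 2 * R + 1" using R True nw by auto
    finally show ?thesis .
  qed (use zero R in auto)
  then show "\<exists>C>0. \<forall>x. \<eta> x \<le> C" using R by (intro exI[of _ "2*R+1"]) auto
  have cont: "continuous_on UNIV \<eta>" unfolding \<eta>_def by (intro continuous_intros)
  show meas[measurable]: "\<eta> \<in> borel_measurable borel" using cont by (rule borel_measurable_continuous_onI)
  have Om: "\<Omega> \<in> sets lborel" using \<Omega>(1) by simp
  have pstar: "0 < frac_crit_exp DIM('a) s p" unfolding frac_crit_exp_def using p sp by simp
  show "\<eta> \<in> Dsp0 s p \<Omega>"
    unfolding Dsp0_def Dsp0_RN_def
  proof (intro CollectI conjI AE_I2 impI zero)
    show "\<eta> \<in> borel_measurable lborel" by simp
    show "integrable lborel (\<lambda>x. \<bar>\<eta> x\<bar> powr frac_crit_exp DIM('a) s p)"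
      using Om \<Omega>(2) pstar nn bnd zero by (intro integrable_bounded_support[where C="2*R+1"]) auto
    show "gagliardo_pow s p \<eta> < \<infinity>"
      using s p Om \<Omega>(2) R lip nn bnd zero
      by (intro gag_lip[where C="2*R+1" and \<Omega>=\<Omega>]) (auto simp: abs_of_nonneg)
  qed
qed




lemma cross_pt:
  fixes d w e p :: real
  assumes p: "1 < p" and wb: "\<bar>w\<bar> \<le> e"
  shows "\<bar>Jp p d * w\<bar> \<le> \<bar>d\<bar> powr p + e powr p"
proof -
  have e0: "0 \<le> e" using wb by linarith
  have "\<bar>Jp p d * w\<bar> = \<bar>d\<bar> powr (p - 1) * \<bar>w\<bar>" using p by (simp add: abs_mult abs_Jp)
  also have "\<dots> \<le> \<bar>d\<bar> powr (p - 1) * e" using wb by (intro mult_left_mono) auto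
  also have "\<dots> \<le> (\<bar>d\<bar> powr (p - 1)) powr (p / (p - 1)) + e powr p"
    using p e0 by (intro young_max) (auto simp: field_simps)
  also have "(\<bar>d\<bar> powr (p - 1)) powr (p / (p - 1)) = \<bar>d\<bar> powr p" using p by (simp add: powr_powr)
  finally show ?thesis .
qed

lemma max0_lip: "\<bar>max 0 (a - c) - max 0 (b - c)\<bar> \<le> \<bar>(a::real) - b\<bar>"
  by (auto simp: max_def)

lemma max0_lip2: "\<bar>max 0 (a::real) - max 0 b\<bar> \<le> \<bar>a - b\<bar>"
  by (auto simp: max_def)

lemma ev_zero:
  fixes e t :: real assumes "0 < t"
  shows "eventually (\<lambda>n. max 0 (e - real n * t) = 0) sequentially"
proof -
  obtain n0 :: nat where n0: "e / t \<le> real n0" using real_arch_simple by blast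
  show ?thesis unfolding eventually_sequentially
  proof (intro exI allI impI)
    fix n assume "n0 \<le> n"
    then have "e / t \<le> real n" using n0 by (meson of_nat_le_iff order_trans)
    then have "e \<le> real n * t" using assms by (simp add: divide_le_eq)
    then show "max 0 (e - real n * t) = 0" by simp
  qed
qed

lemma pos_integral:
  fixes f :: "'a \<Rightarrow> real"
  assumes f: "integrable M f" and nn: "AE x in M. 0 \<le> f x" and S: "S \<in> sets M" "S \<notin> null_sets M"
    and pos: "\<And>x. x \<in> S \<Longrightarrow> 0 < f x"
  shows "0 < integral\<^sup>L M f"
proof -
  have "0 \<le> integral\<^sup>L M f" using nn by (rule integral_nonneg_AE)
  moreover have "integral\<^sup>L M f \<noteq> 0"
  proof
    assume "integral\<^sup>L M f = 0"
    then have "AE x in M. f x = 0" using integral_nonneg_eq_0_iff_AE[OF f nn] by simp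
    then have "AE x in M. x \<notin> S" by eventually_elim (use pos in force)
    then have "S \<in> null_sets M" using S(1) by (simp add: AE_iff_null_sets)
    with S(2) show False by simp
  qed
  ultimately show ?thesis by simp
qed




theorem propositionB3:
  fixes \<Omega> :: "'a::euclidean_space set"
    and s p q \<mu> :: real
    and a u :: "'a \<Rightarrow> real"
  assumes p: "1 < p"
    and s: "0 < s" "s < 1"
    and sp: "s * p < real DIM('a)"
    and \<Omega>: "open \<Omega>" "bounded \<Omega>" "connected \<Omega>"
    and a_meas: "a \<in> borel_measurable lborel"
    and a_int: "set_integrable lborel \<Omega> (\<lambda>x. \<bar>a x\<bar> powr (real DIM('a) / (s * p)))"
    and q: "p \<le> q" "q \<le> frac_crit_exp DIM('a) s p"
    and u: "u \<in> Dsp0 s p \<Omega>"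
    and u_ne: "\<not> (AE x in lborel. u x = 0)"
    and u_nonneg: "AE x in lborel. 0 \<le> u x"
    and super: "\<And>\<phi>. \<phi> \<in> Dsp0 s p \<Omega> \<Longrightarrow> (AE x in lborel. 0 \<le> \<phi> x) \<Longrightarrow>
        (\<integral>z. Jp p (u (fst z) - u (snd z)) * (\<phi> (fst z) - \<phi> (snd z)) /
              norm (fst z - snd z) powr (real DIM('a) + s * p) \<partial>(lborel \<Otimes>\<^sub>M lborel))
        + (LINT x:\<Omega>|lborel. a x * u x powr (p - 1) * \<phi> x)
        \<ge> \<mu> * (LINT x:\<Omega>|lborel. u x powr (q - 1) * \<phi> x)"
  shows "AE x in lborel. x \<in> \<Omega> \<longrightarrow> 0 < u x"
proof (rule ccontr)
  assume neg: "\<not> (AE x in lborel. x \<in> \<Omega> \<longrightarrow> 0 < u x)"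
  define N where "N = real DIM('a)"
  define P where "P = frac_crit_exp DIM('a) s p"
  define K where "K z = norm (fst z - snd z) powr (N + s * p)" for z :: "'a \<times> 'a"
  have N0: "0 < N" unfolding N_def by simp
  have spN: "s * p < N" using sp unfolding N_def .
  have sp0: "0 < s * p" using s p by simp
  have P_eq: "P = N * p / (N - s * p)" unfolding P_def frac_crit_exp_def N_def by simp
  have P0: "0 < P" unfolding P_eq using N0 spN p by simp
  have K0: "0 \<le> K z" for z unfolding K_def by simp
  have K_meas[measurable]: "K \<in> borel_measurable (lborel \<Otimes>\<^sub>M lborel)" unfolding K_def by measurable
  have u_meas[measurable]: "u \<in> borel_measurable borel"
    and u_int: "integrable lborel (\<lambda>x. \<bar>u x\<bar> powr P)"
    and gu: "gagliardo_pow s p u < \<infinity>"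
    and u_out: "AE x in lborel. x \<notin> \<Omega> \<longrightarrow> u x = 0"
    using u unfolding Dsp0_def Dsp0_RN_def P_def by auto
  have a_m[measurable]: "a \<in> borel_measurable borel" using a_meas by simp
  have Om[measurable]: "\<Omega> \<in> sets borel" using \<Omega>(1) by simp
  obtain \<eta> :: "'a \<Rightarrow> real" where eta1: "\<eta> \<in> Dsp0 s p \<Omega>" and eta2: "\<And>x. 0 \<le> \<eta> x"
    and eta3: "\<And>x. x \<in> \<Omega> \<Longrightarrow> 0 < \<eta> x" and eta4: "\<And>x. x \<notin> \<Omega> \<Longrightarrow> \<eta> x = 0"
    and eta_m[measurable]: "\<eta> \<in> borel_measurable borel" and eta6: "\<exists>C>0. \<forall>x. \<eta> x \<le> C"
    apply (rule that[of "\<lambda>x. infdist x (- \<Omega>)"])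
    using eta_props[OF s p sp \<Omega>(1,2)] by auto
  obtain C where C: "0 < C" "\<And>x. \<eta> x \<le> C" using eta6 by auto
  have geta: "gagliardo_pow s p \<eta> < \<infinity>" using eta1 unfolding Dsp0_def Dsp0_RN_def by auto
  define Z where "Z = {x \<in> \<Omega>. u x = 0}"
  define Pos where "Pos = {x. 0 < u x}"
  have Z_m[measurable]: "Z \<in> sets borel" unfolding Z_def by measurable
  have Pos_m[measurable]: "Pos \<in> sets borel" unfolding Pos_def by measurable
  have Znn: "Z \<notin> null_sets lborel"
  proof
    assume "Z \<in> null_sets lborel"
    then have "AE x in lborel. x \<notin> Z" by (rule AE_not_in)
    with u_nonneg have "AE x in lborel. x \<in> \<Omega> \<longrightarrow> 0 < u x" by eventually_elim (auto simp: Z_def)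
    with neg show False by simp
  qed
  have Pnn: "Pos \<notin> null_sets lborel"
  proof
    assume "Pos \<in> null_sets lborel"
    then have "AE x in lborel. x \<notin> Pos" by (rule AE_not_in)
    with u_nonneg have "AE x in lborel. u x = 0" by eventually_elim (auto simp: Pos_def)
    with u_ne show False by simp
  qed
  have AE2: "AE z in lborel \<Otimes>\<^sub>M lborel. 0 \<le> u (fst z) \<and> 0 \<le> u (snd z)"
  proof -
    define Neg where "Neg = {x. u x < 0}"
    have Neg_m[measurable]: "Neg \<in> sets borel" unfolding Neg_def by measurable
    have "AE x in lborel. x \<notin> Neg" using u_nonneg by eventually_elim (auto simp: Neg_def)
    then have Nn: "Neg \<in> null_sets lborel" by (simp add: AE_iff_null_sets)
    have "Neg \<times> UNIV \<in> null_sets (lborel \<Otimes>\<^sub>M lborel)"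
      using Nn by (intro lborel.times_in_null_sets1) auto
    moreover have "UNIV \<times> Neg \<in> null_sets (lborel \<Otimes>\<^sub>M lborel)"
      using Nn by (intro lborel.times_in_null_sets2) auto
    ultimately have "Neg \<times> UNIV \<union> UNIV \<times> Neg \<in> null_sets (lborel \<Otimes>\<^sub>M lborel)" by auto
    then show ?thesis by (rule AE_I') (auto simp: Neg_def)
  qed
  define h where "h n x t = max 0 (\<eta> x - real n * t)" for n :: nat and x and t :: real
  define \<phi> where "\<phi> n x = h n x (u x)" for n x
  have h_mono: "h n x t2 \<le> h n x t1" if "t1 \<le> t2" for n x t1 t2
    using mult_left_mono[OF that, of "real n"] unfolding h_def by (auto simp: max_def)
  have h_zero: "h n x 0 = \<eta> x" for n x unfolding h_def using eta2[of x] by simp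
  have h_ev: "eventually (\<lambda>n. h n x t = 0) sequentially" if "0 < t" for x t
    unfolding h_def using ev_zero[OF that] .
  have phi_m[measurable]: "\<phi> n \<in> borel_measurable borel" for n unfolding \<phi>_def h_def by measurable
  have phi_nn: "0 \<le> \<phi> n x" for n x unfolding \<phi>_def h_def by simp
  have phi_le: "AE x in lborel. \<phi> n x \<le> \<eta> x" for n
    using u_nonneg by eventually_elim (auto simp: \<phi>_def h_def eta2)
  have phi_out: "AE x in lborel. x \<notin> \<Omega> \<longrightarrow> \<phi> n x = 0" for n
    using u_nonneg by eventually_elim (auto simp: \<phi>_def h_def eta4)
  have phi_D: "\<phi> n \<in> Dsp0 s p \<Omega>" for n
  proof -
    have bd: "\<bar>\<phi> n x - \<phi> n y\<bar> \<le> \<bar>\<eta> x - \<eta> y\<bar> + real n * \<bar>u x - u y\<bar>" for x y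
    proof -
      have "\<bar>\<phi> n x - \<phi> n y\<bar> \<le> \<bar>(\<eta> x - real n * u x) - (\<eta> y - real n * u y)\<bar>"
        unfolding \<phi>_def h_def by (rule max0_lip2)
      also have "\<dots> = \<bar>(\<eta> x - \<eta> y) - real n * (u x - u y)\<bar>" by (simp add: algebra_simps)
      also have "\<dots> \<le> \<bar>\<eta> x - \<eta> y\<bar> + \<bar>real n * (u x - u y)\<bar>" by (rule abs_triangle_ineq4)
      also have "\<bar>real n * (u x - u y)\<bar> = real n * \<bar>u x - u y\<bar>" by (simp add: abs_mult)
      finally show ?thesis .
    qed
    have gphi: "gagliardo_pow s p (\<phi> n) < \<infinity>"
      by (rule gag_comb[where g=\<eta> and h=u and c="real n"], use p in simp, measurable, measurable,
          rule geta, rule gu, simp, rule bd)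
    have ib: "integrable lborel (\<lambda>x. \<bar>\<phi> n x\<bar> powr P)"
    proof (rule integrable_bounded_support[where C=C and \<Omega>=\<Omega>])
      show "AE x in lborel. \<bar>\<phi> n x\<bar> \<le> C" using phi_le[of n]
      proof eventually_elim
        case (elim x) then show ?case using phi_nn[of n x] C(2)[of x] by simp
      qed
    qed (use P0 phi_out \<Omega>(1,2) in auto)
    show ?thesis unfolding Dsp0_def Dsp0_RN_def using gphi ib phi_out[of n] by (auto simp: P_def)
  qed
  note Ineq = super[OF phi_D AE_I2[OF phi_nn]]
  have Om_fin: "emeasure lborel \<Omega> < \<infinity>" using \<Omega>(2) by (rule emeasure_bounded_finite)
  have ind_int: "integrable lborel (\<lambda>x. indicator \<Omega> x :: real)"
    using Om_fin by (intro integrable_real_indicator) auto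
  have uP_int: "integrable lborel (\<lambda>x. indicator \<Omega> x * (1 + \<bar>u x\<bar> powr P))"
  proof -
    have "integrable lborel (\<lambda>x. \<bar>u x\<bar> powr P * indicator \<Omega> x)"
      using u_int by (intro integrable_real_mult_indicator) auto
    then have "integrable lborel (\<lambda>x. indicator \<Omega> x + \<bar>u x\<bar> powr P * indicator \<Omega> x)"
      using ind_int by (intro Bochner_Integration.integrable_add)
    then show ?thesis by (simp add: algebra_simps)
  qed
  have aP_int: "integrable lborel (\<lambda>x. indicator \<Omega> x * \<bar>a x\<bar> powr (real DIM('a) / (s * p)))"
    using a_int by (simp add: set_integrable_def)
  have phi_lim: "(\<lambda>n. c * u x powr e * \<phi> n x) \<longlonglongrightarrow> 0" if "0 \<le> u x" for x c e
  proof (cases "u x = 0")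
    case True then show ?thesis by simp
  next
    case False
    then have "0 < u x" using that by simp
    then have "eventually (\<lambda>n. c * u x powr e * \<phi> n x = 0) sequentially"
      using h_ev[of "u x" x] by (auto elim: eventually_mono simp: \<phi>_def)
    then show ?thesis by (rule tendsto_eventually)
  qed
  have phi_C: "\<phi> n x \<le> C" if "0 \<le> u x" for n x
  proof -
    have "0 \<le> real n * u x" using that by simp
    then show ?thesis using C(2)[of x] C(1) unfolding \<phi>_def h_def by auto
  qed
  define \<alpha> where "\<alpha> = real DIM('a) / (s * p)"
  define \<beta> where "\<beta> = N / (N - s * p)"
  have \<alpha>\<beta>: "1 < \<alpha>" "1 < \<beta>" "(\<alpha> - 1) * (\<beta> - 1) = 1"
    unfolding \<alpha>_def \<beta>_def N_def[symmetric] using spN sp0 N0 by (auto simp: field_simps)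
  have pb: "0 < (p - 1) * \<beta>" "(p - 1) * \<beta> \<le> P"
  proof -
    show "0 < (p - 1) * \<beta>" unfolding \<beta>_def using p spN N0 by simp
    have "(p - 1) * N \<le> N * p" using N0 by (simp add: algebra_simps)
    then show "(p - 1) * \<beta> \<le> P" unfolding \<beta>_def P_eq using spN
      by (simp add: divide_right_mono)
  qed
  have Plim: "(\<lambda>n. LINT x:\<Omega>|lborel. a x * u x powr (p - 1) * \<phi> n x) \<longlonglongrightarrow> 0"
  proof -
    have "(\<lambda>n. integral\<^sup>L lborel (\<lambda>x. indicator \<Omega> x *\<^sub>R (a x * u x powr (p - 1) * \<phi> n x)))
        \<longlonglongrightarrow> integral\<^sup>L lborel (\<lambda>x::'a. 0::real)"
    proof (rule Bochner_Integration.integral_dominated_convergence[where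
          w = "\<lambda>x. C * (indicator \<Omega> x * \<bar>a x\<bar> powr \<alpha> + indicator \<Omega> x * (1 + \<bar>u x\<bar> powr P))"
          and s = "\<lambda>n x. indicator \<Omega> x *\<^sub>R (a x * u x powr (p - 1) * \<phi> n x)" and f = "\<lambda>x. 0"])
      show "integrable lborel (\<lambda>x. C * (indicator \<Omega> x * \<bar>a x\<bar> powr \<alpha> + indicator \<Omega> x * (1 + \<bar>u x\<bar> powr P)))"
        using aP_int uP_int unfolding \<alpha>_def by (intro integrable_mult_right Bochner_Integration.integrable_add)
      show "AE x in lborel. (\<lambda>n. indicator \<Omega> x *\<^sub>R (a x * u x powr (p - 1) * \<phi> n x)) \<longlonglongrightarrow> 0"
        using u_nonneg
      proof eventually_elim
        case (elim x)
        from phi_lim[OF elim, of "indicator \<Omega> x * a x" "p - 1"]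
        show ?case by (simp add: mult.assoc)
      qed
      show "AE x in lborel. norm (indicator \<Omega> x *\<^sub>R (a x * u x powr (p - 1) * \<phi> n x))
          \<le> C * (indicator \<Omega> x * \<bar>a x\<bar> powr \<alpha> + indicator \<Omega> x * (1 + \<bar>u x\<bar> powr P))" for n
        using u_nonneg
      proof eventually_elim
        case (elim x)
        show ?case
        proof (cases "x \<in> \<Omega>")
          case False then show ?thesis using C(1) by simp
        next
          case True
          have "\<bar>a x\<bar> * u x powr (p - 1) \<le> \<bar>a x\<bar> powr \<alpha> + (u x powr (p - 1)) powr \<beta>"
            using \<alpha>\<beta> by (intro young_max) auto
          also have "(u x powr (p - 1)) powr \<beta> = u x powr ((p - 1) * \<beta>)" by (simp add: powr_powr)
          also have "\<dots> \<le> 1 + u x powr P" using pb elim by (intro powr_le_1_plus) auto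
          finally have y: "\<bar>a x\<bar> * u x powr (p - 1) \<le> \<bar>a x\<bar> powr \<alpha> + (1 + \<bar>u x\<bar> powr P)"
            using elim by simp
          have "\<bar>a x * u x powr (p - 1) * \<phi> n x\<bar> = (\<bar>a x\<bar> * u x powr (p - 1)) * \<phi> n x"
            using phi_nn[of n x] by (simp add: abs_mult)
          also have "\<dots> \<le> (\<bar>a x\<bar> * u x powr (p - 1)) * C"
            using phi_C[OF elim, of n] by (intro mult_left_mono) auto
          also have "\<dots> \<le> (\<bar>a x\<bar> powr \<alpha> + (1 + \<bar>u x\<bar> powr P)) * C"
            using y C(1) by (intro mult_right_mono) auto
          finally show ?thesis using True by (simp add: mult.commute)
        qed
      qed
    qed measurable
    then show ?thesis by (simp add: set_lebesgue_integral_def)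
  qed
  have Qlim: "(\<lambda>n. LINT x:\<Omega>|lborel. u x powr (q - 1) * \<phi> n x) \<longlonglongrightarrow> 0"
  proof -
    have "(\<lambda>n. integral\<^sup>L lborel (\<lambda>x. indicator \<Omega> x *\<^sub>R (u x powr (q - 1) * \<phi> n x)))
        \<longlonglongrightarrow> integral\<^sup>L lborel (\<lambda>x::'a. 0::real)"
    proof (rule Bochner_Integration.integral_dominated_convergence[where
          w = "\<lambda>x. C * (indicator \<Omega> x * (1 + \<bar>u x\<bar> powr P))"
          and s = "\<lambda>n x. indicator \<Omega> x *\<^sub>R (u x powr (q - 1) * \<phi> n x)" and f = "\<lambda>x. 0"])
      show "integrable lborel (\<lambda>x. C * (indicator \<Omega> x * (1 + \<bar>u x\<bar> powr P)))"
        using uP_int by (intro integrable_mult_right)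
      show "AE x in lborel. (\<lambda>n. indicator \<Omega> x *\<^sub>R (u x powr (q - 1) * \<phi> n x)) \<longlonglongrightarrow> 0"
        using u_nonneg
      proof eventually_elim
        case (elim x)
        from phi_lim[OF elim, of "indicator \<Omega> x" "q - 1"]
        show ?case by (simp add: mult.assoc)
      qed
      show "AE x in lborel. norm (indicator \<Omega> x *\<^sub>R (u x powr (q - 1) * \<phi> n x))
          \<le> C * (indicator \<Omega> x * (1 + \<bar>u x\<bar> powr P))" for n
        using u_nonneg
      proof eventually_elim
        case (elim x)
        show ?case
        proof (cases "x \<in> \<Omega>")
          case False then show ?thesis using C(1) by simp
        next
          case True
          have "u x powr (q - 1) \<le> 1 + u x powr P" using q p elim P_def by (intro powr_le_1_plus) auto
          then have y: "u x powr (q - 1) \<le> 1 + \<bar>u x\<bar> powr P" using elim by simp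
          have "\<bar>u x powr (q - 1) * \<phi> n x\<bar> = u x powr (q - 1) * \<phi> n x"
            using phi_nn[of n x] by (simp add: abs_mult)
          also have "\<dots> \<le> u x powr (q - 1) * C"
            using phi_C[OF elim, of n] by (intro mult_left_mono) auto
          also have "\<dots> \<le> (1 + \<bar>u x\<bar> powr P) * C"
            using y C(1) by (intro mult_right_mono) auto
          finally show ?thesis using True by (simp add: mult.commute)
        qed
      qed
    qed measurable
    then show ?thesis by (simp add: set_lebesgue_integral_def)
  qed
  define M2 where "M2 = (lborel \<Otimes>\<^sub>M lborel :: ('a \<times> 'a) measure)"
  define d where "d z = u (fst z) - u (snd z)" for z :: "'a \<times> 'a"
  define A where "A n z = Jp p (d z) * (h n (fst z) (u (fst z)) - h n (fst z) (u (snd z))) / K z" for n z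
  define B where "B n z = Jp p (d z) * (h n (fst z) (u (snd z)) - h n (snd z) (u (snd z))) / K z" for n z
  define Gi where "Gi n z = Jp p (u (fst z) - u (snd z)) * (\<phi> n (fst z) - \<phi> n (snd z)) /
              norm (fst z - snd z) powr (real DIM('a) + s * p)" for n z
  define Binf where "Binf z = (if u (snd z) = 0 then Jp p (d z) * (\<eta> (fst z) - \<eta> (snd z)) / K z else 0)" for z
  define ind where "ind t = (if t = 0 then 1 else (0::real))" for t :: real
  define F where "F z = - (Jp p (d z) * (\<eta> (fst z) * ind (u (fst z)) - \<eta> (fst z) * ind (u (snd z)))) / K z" for z
  define W where "W z = (\<bar>d z\<bar> powr p + \<bar>\<eta> (fst z) - \<eta> (snd z)\<bar> powr p) / K z" for z
  have A_m[measurable]: "A n \<in> borel_measurable M2" for n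
    unfolding A_def h_def d_def K_def M2_def by measurable
  have B_m[measurable]: "B n \<in> borel_measurable M2" for n
    unfolding B_def h_def d_def K_def M2_def by measurable
  have Binf_m[measurable]: "Binf \<in> borel_measurable M2"
    unfolding Binf_def d_def K_def M2_def by measurable
  have F_m[measurable]: "F \<in> borel_measurable M2"
    unfolding F_def ind_def d_def K_def M2_def by measurable
  have W_int: "integrable M2 W"
  proof -
    have "integrable M2 (\<lambda>z. \<bar>u (fst z) - u (snd z)\<bar> powr p / K z + \<bar>\<eta> (fst z) - \<eta> (snd z)\<bar> powr p / K z)"
      unfolding M2_def K_def N_def by (intro Bochner_Integration.integrable_add gag_integrable gu geta) measurable
    then show ?thesis unfolding W_def d_def by (simp add: add_divide_distrib)
  qed
  have intB: "integrable M2 (B n)" for n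
    unfolding B_def d_def K_def N_def M2_def
    by (rule integrable_cross[where g=\<eta>], use p in simp, measurable, measurable,
        unfold h_def, measurable, rule gu, rule geta, rule max0_lip)
  have gphi: "gagliardo_pow s p (\<phi> n) < \<infinity>" for n using phi_D[of n] unfolding Dsp0_def Dsp0_RN_def by auto
  have intG: "integrable M2 (Gi n)" for n
    unfolding Gi_def M2_def
    by (rule integrable_cross[where g="\<phi> n"], use p in simp, measurable, measurable, measurable,
        rule gu, rule gphi, simp)
  have G_split: "Gi n z = A n z + B n z" for n z
    unfolding Gi_def A_def B_def \<phi>_def d_def K_def N_def
    by (simp add: add_divide_distrib[symmetric] algebra_simps)
  have intA: "integrable M2 (A n)" for n
  proof -
    have "integrable M2 (\<lambda>z. Gi n z - B n z)" using intG intB by (rule Bochner_Integration.integrable_diff)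
    then show ?thesis by (simp add: G_split)
  qed
  have G_int: "integral\<^sup>L M2 (Gi n) = integral\<^sup>L M2 (A n) + integral\<^sup>L M2 (B n)" for n
  proof -
    have "Gi n = (\<lambda>z. A n z + B n z)" using G_split by auto
    then show ?thesis using intA[of n] intB[of n] by simp
  qed
  have A_np: "A n z \<le> 0" for n z
  proof (cases "u (snd z) \<le> u (fst z)")
    case True
    have "0 \<le> Jp p (d z)" using True by (intro Jp_sign) (simp add: d_def)
    moreover have "h n (fst z) (u (fst z)) - h n (fst z) (u (snd z)) \<le> 0" using h_mono[OF True] by simp
    ultimately show ?thesis unfolding A_def using K0[of z]
      by (intro divide_nonpos_nonneg mult_nonneg_nonpos) auto
  next
    case False
    have "Jp p (d z) \<le> 0" using False by (intro Jp_sign) (simp add: d_def)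
    moreover have "0 \<le> h n (fst z) (u (fst z)) - h n (fst z) (u (snd z))" using h_mono[of "u (fst z)" "u (snd z)"] False by simp
    ultimately show ?thesis unfolding A_def using K0[of z]
      by (intro divide_nonpos_nonneg mult_nonpos_nonneg) auto
  qed
  have B_bound: "AE z in M2. norm (B n z) \<le> W z" for n
  proof (intro AE_I2)
    fix z :: "'a \<times> 'a"
    have "\<bar>Jp p (d z) * (h n (fst z) (u (snd z)) - h n (snd z) (u (snd z)))\<bar>
        \<le> \<bar>d z\<bar> powr p + \<bar>\<eta> (fst z) - \<eta> (snd z)\<bar> powr p"
      using p unfolding h_def by (intro cross_pt max0_lip)
    then show "norm (B n z) \<le> W z" unfolding B_def W_def using K0[of z]
      by (simp add: abs_div_pos divide_right_mono)
  qed
  have hlim: "eventually (\<lambda>n. h n x t = \<eta> x * ind t) sequentially" if "0 \<le> t" for x t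
  proof (cases "t = 0")
    case True then show ?thesis by (simp add: h_zero ind_def)
  next
    case False
    then have "0 < t" using that by simp
    then show ?thesis using h_ev[of t x] False by (auto simp: ind_def elim: eventually_mono)
  qed
  have B_lim: "AE z in M2. (\<lambda>n. B n z) \<longlonglongrightarrow> Binf z"
    using AE2 unfolding M2_def
  proof eventually_elim
    case (elim z)
    show ?case
    proof (cases "u (snd z) = 0")
      case True
      then have "B n z = Binf z" for n unfolding B_def Binf_def by (simp add: h_zero)
      then show ?thesis by simp
    next
      case False
      then have pos: "0 < u (snd z)" using elim by simp
      have "eventually (\<lambda>n. B n z = Binf z) sequentially"
        using eventually_conj[OF h_ev[OF pos, of "fst z"] h_ev[OF pos, of "snd z"]] False
        by (auto simp: B_def Binf_def elim: eventually_mono)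
      then show ?thesis by (rule tendsto_eventually)
    qed
  qed
  have Binf_int: "integrable M2 Binf"
    using Binf_m B_m W_int B_lim B_bound by (rule integrable_dominated_convergence)
  have Blim: "(\<lambda>n. integral\<^sup>L M2 (B n)) \<longlonglongrightarrow> integral\<^sup>L M2 Binf"
    using Binf_m B_m W_int B_lim B_bound by (rule Bochner_Integration.integral_dominated_convergence)
  define r where "r n = integral\<^sup>L M2 (B n) + (LINT x:\<Omega>|lborel. a x * u x powr (p - 1) * \<phi> n x)
     - \<mu> * (LINT x:\<Omega>|lborel. u x powr (q - 1) * \<phi> n x)" for n
  have rlim: "r \<longlonglongrightarrow> integral\<^sup>L M2 Binf + 0 - \<mu> * 0"
    unfolding r_def by (intro tendsto_intros Blim Plim Qlim)
  have r_bound: "integral\<^sup>L M2 (\<lambda>z. - A n z) \<le> r n" for n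
  proof -
    have "\<mu> * (LINT x:\<Omega>|lborel. u x powr (q - 1) * \<phi> n x)
       \<le> integral\<^sup>L M2 (Gi n) + (LINT x:\<Omega>|lborel. a x * u x powr (p - 1) * \<phi> n x)"
      using Ineq[of n] unfolding Gi_def M2_def by simp
    then show ?thesis unfolding r_def G_int by simp
  qed
  have A_ev: "AE z in M2. eventually (\<lambda>n. - A n z = F z) sequentially"
    using AE2 unfolding M2_def
  proof eventually_elim
    case (elim z)
    show ?case
      using eventually_conj[OF hlim[OF conjunct1[OF elim], of "fst z"] hlim[OF conjunct2[OF elim], of "fst z"]]
      by (elim eventually_mono) (simp add: A_def F_def)
  qed
  have int_nA: "integrable M2 (\<lambda>z. - A n z)" for n using intA[of n] by simp
  have eqnn: "(\<integral>\<^sup>+z. ennreal (- A n z) \<partial>M2) = ennreal (integral\<^sup>L M2 (\<lambda>z. - A n z))" for n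
    using int_nA[of n] A_np by (intro nn_integral_eq_integral) auto
  have FI: "(\<integral>\<^sup>+z. ennreal (F z) \<partial>M2) \<le> ennreal (integral\<^sup>L M2 Binf)"
  proof -
    have "(\<integral>\<^sup>+z. ennreal (F z) \<partial>M2) = (\<integral>\<^sup>+z. liminf (\<lambda>n. ennreal (- A n z)) \<partial>M2)"
    proof (rule nn_integral_cong_AE)
      show "AE z in M2. ennreal (F z) = liminf (\<lambda>n. ennreal (- A n z))"
        using A_ev
      proof eventually_elim
        case (elim z)
        then have "eventually (\<lambda>n. ennreal (- A n z) = ennreal (F z)) sequentially"
          by (elim eventually_mono) simp
        then have "(\<lambda>n. ennreal (- A n z)) \<longlonglongrightarrow> ennreal (F z)" by (rule tendsto_eventually)
        then show ?case by (simp add: lim_imp_Liminf)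
      qed
    qed
    also have "\<dots> \<le> liminf (\<lambda>n. \<integral>\<^sup>+z. ennreal (- A n z) \<partial>M2)"
      by (rule nn_integral_liminf) measurable
    also have "\<dots> = liminf (\<lambda>n. ennreal (integral\<^sup>L M2 (\<lambda>z. - A n z)))" by (simp add: eqnn)
    also have "\<dots> \<le> liminf (\<lambda>n. ennreal (r n))"
      by (intro Liminf_mono always_eventually allI ennreal_leI r_bound)
    also have "\<dots> = ennreal (integral\<^sup>L M2 Binf)"
    proof -
      have "(\<lambda>n. ennreal (r n)) \<longlonglongrightarrow> ennreal (integral\<^sup>L M2 Binf)"
        using rlim by (intro tendsto_ennrealI) simp
      then show ?thesis by (simp add: lim_imp_Liminf)
    qed
    finally show ?thesis .
  qed
  have Jp0: "Jp p 0 = 0" by (simp add: Jp_def)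
  have FB: "AE z in M2. 0 \<le> F z \<and> Binf z \<le> F z"
    using AE2 unfolding M2_def
  proof eventually_elim
    case (elim z)
    have Kz: "0 \<le> K z" by (rule K0)
    show ?case
    proof (cases "u (fst z) = 0")
      case ux: True
      show ?thesis
      proof (cases "u (snd z) = 0")
        case True then show ?thesis using ux by (simp add: F_def Binf_def d_def Jp0)
      next
        case False
        have "d z \<le> 0" using ux elim by (simp add: d_def)
        then have "Jp p (d z) \<le> 0" by (rule Jp_sign)
        then have "0 \<le> - (Jp p (d z) * \<eta> (fst z))" using eta2[of "fst z"]
          by (simp add: mult_nonpos_nonneg)
        then have "0 \<le> F z" unfolding F_def ind_def using ux False Kz by (simp add: divide_nonpos_nonneg)
        moreover have "Binf z = 0" using False by (simp add: Binf_def)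
        ultimately show ?thesis by simp
      qed
    next
      case ux: False
      show ?thesis
      proof (cases "u (snd z) = 0")
        case True
        have "0 \<le> d z" using True elim by (simp add: d_def)
        then have J: "0 \<le> Jp p (d z)" by (rule Jp_sign)
        have Fz: "F z = Jp p (d z) * \<eta> (fst z) / K z" unfolding F_def ind_def using ux True by simp
        have "0 \<le> F z" unfolding Fz using J eta2[of "fst z"] Kz by simp
        moreover have "F z - Binf z = Jp p (d z) * \<eta> (snd z) / K z"
          unfolding Fz Binf_def using True by (simp add: diff_divide_distrib[symmetric] algebra_simps)
        moreover have "0 \<le> Jp p (d z) * \<eta> (snd z) / K z" using J eta2[of "snd z"] Kz by simp
        ultimately show ?thesis by simp
      next
        case False then show ?thesis using ux by (simp add: F_def Binf_def ind_def)
      qed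
    qed
  qed
  define S where "S = Z \<times> Pos"
  have S_m: "S \<in> sets M2" unfolding S_def M2_def by measurable
  have S_nn: "S \<notin> null_sets M2"
  proof
    assume "S \<in> null_sets M2"
    then have "emeasure M2 S = 0" by auto
    moreover have "emeasure M2 S = emeasure lborel Z * emeasure lborel Pos"
      unfolding S_def M2_def by (rule lborel.emeasure_pair_measure_Times) auto
    moreover have "emeasure lborel Z \<noteq> 0" using Znn by auto
    moreover have "emeasure lborel Pos \<noteq> 0" using Pnn by auto
    ultimately show False by simp
  qed
  have S_pos: "0 < F z \<and> Binf z = 0" if "z \<in> S" for z
  proof -
    have x: "fst z \<in> \<Omega>" "u (fst z) = 0" and y: "0 < u (snd z)"
      using that by (auto simp: S_def Z_def Pos_def)
    have "fst z \<noteq> snd z" using x y by auto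
    then have Kp: "0 < K z" unfolding K_def by simp
    have "d z = - u (snd z)" using x by (simp add: d_def)
    then have J: "Jp p (d z) = - (u (snd z) powr (p - 1))" using Jp_neg[OF y p] by simp
    have "F z = u (snd z) powr (p - 1) * \<eta> (fst z) / K z"
      unfolding F_def ind_def J using x y by simp
    moreover have "0 < u (snd z) powr (p - 1) * \<eta> (fst z)" using y eta3[OF x(1)] by simp
    ultimately have "0 < F z" using Kp by simp
    moreover have "Binf z = 0" using y by (simp add: Binf_def)
    ultimately show ?thesis by simp
  qed
  have F_int: "integrable M2 F"
  proof (rule integrableI_nonneg)
    show "AE z in M2. 0 \<le> F z" using FB by auto
    show "(\<integral>\<^sup>+z. ennreal (F z) \<partial>M2) < \<infinity>" using FI by (simp add: le_less_trans)
  qed simp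
  have F_pos: "0 < integral\<^sup>L M2 F"
    using F_int _ S_m S_nn by (rule pos_integral) (use FB S_pos in auto)
  have FB_int: "integrable M2 (\<lambda>z. F z - Binf z)" using F_int Binf_int by simp
  have FB_pos: "0 < integral\<^sup>L M2 (\<lambda>z. F z - Binf z)"
    using FB_int _ S_m S_nn by (rule pos_integral) (use FB S_pos in auto)
  then have FB_pos': "integral\<^sup>L M2 Binf < integral\<^sup>L M2 F"
    using F_int Binf_int by simp
  have "ennreal (integral\<^sup>L M2 F) = (\<integral>\<^sup>+z. ennreal (F z) \<partial>M2)"
    using F_int FB by (intro nn_integral_eq_integral[symmetric]) auto
  also note FI
  finally have le: "ennreal (integral\<^sup>L M2 F) \<le> ennreal (integral\<^sup>L M2 Binf)" .
  show False
  proof (cases "0 \<le> integral\<^sup>L M2 Binf")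
    case True
    then have "integral\<^sup>L M2 F \<le> integral\<^sup>L M2 Binf" using le by (simp add: ennreal_le_iff)
    then show False using FB_pos' by simp
  next
    case False
    then have "ennreal (integral\<^sup>L M2 F) \<le> 0" using le by (simp add: ennreal_neg)
    then have "integral\<^sup>L M2 F \<le> 0" by (metis ennreal_eq_0_iff le_zero_eq)
    then show False using F_pos by simp
  qed
qed



end
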